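(* Let $L\ge2$, $D\ge 1$ be integers and for $k\in\mathbb{R}$ let \[ \operatorname{ELB}(k;L,D)=\log\left(L-1+\exp\left(2D^{k-\frac12}\right)\right)-\frac{2D^{k-\frac12}\exp\left(2D^{k-\frac12}\right)}{L-1+\exp\left(2D^{k-\frac12}\right)}. \] Then $\operatorname{ELB}(k;L,D)$ is a monotonically decreasing function of $k$, and it is bounded between $0$ and $\log L$.
   Context: $\log$ is the natural logarithm. (The proof treats $D>1$ implicitly so that $D^{k-1/2}$ is increasing in $k$.) *)

theory Defs imports Complex_Main begin

definition ELB :: "real \<Rightarrow> nat \<Rightarrow> nat \<Rightarrow> real" where
  "ELB k L D =
     ln (real L - 1 + exp (2 * real D powr (k - 1/2)))
     - (2 * real D powr (k - 1/2) * exp (2 * real D powr (k - 1/2)))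
       / (real L - 1 + exp (2 * real D powr (k - 1/2)))"

end

theory Submission imports Defs begin

definition gg :: "real \<Rightarrow> real \<Rightarrow> real" where
  "gg c x = ln (c + exp x) - x * exp x / (c + exp x)"

lemma gg_deriv:
  assumes "c \<ge> 1"
  shows "DERIV (gg c) x :> - c * x * exp x / (c + exp x)^2"
proof -
  have pos: "c + exp x > 0" using assms by (smt (verit) exp_gt_zero)
  have "DERIV (gg c) x :> exp x / (c + exp x) - ((exp x + x * exp x) * (c + exp x) - x * exp x * exp x) / (c + exp x)^2"
    unfolding gg_def
    using pos by (auto intro!: derivative_eq_intros simp: power2_eq_square)
  moreover have "exp x / (c + exp x) - ((exp x + x * exp x) * (c + exp x) - x * exp x * exp x) / (c + exp x)^2
      = - c * x * exp x / (c + exp x)^2"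
  proof -
    have "exp x / (c + exp x) = exp x * (c + exp x) / (c + exp x)^2"
      using pos by (simp add: power2_eq_square)
    hence "exp x / (c + exp x) - ((exp x + x * exp x) * (c + exp x) - x * exp x * exp x) / (c + exp x)^2
      = (exp x * (c + exp x) - ((exp x + x * exp x) * (c + exp x) - x * exp x * exp x)) / (c + exp x)^2"
      by (simp add: diff_divide_distrib)
    also have "exp x * (c + exp x) - ((exp x + x * exp x) * (c + exp x) - x * exp x * exp x) = - c * x * exp x"
      by (simp add: algebra_simps)
    finally show ?thesis .
  qed
  ultimately show ?thesis by simp
qed

lemma gg_anti:
  assumes "c \<ge> 1" "0 \<le> a" "a \<le> b"
  shows "gg c b \<le> gg c a"
proof (rule DERIV_nonpos_imp_nonincreasing[OF assms(3)])
  fix x assume "a \<le> x" "x \<le> b"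
  hence "x \<ge> 0" using assms by simp
  have "- c * x * exp x / (c + exp x)^2 \<le> 0"
    using \<open>x \<ge> 0\<close> assms(1) by (intro divide_nonpos_nonneg) (auto simp: mult_nonneg_nonneg)
  thus "\<exists>y. DERIV (gg c) x :> y \<and> y \<le> 0" using gg_deriv[OF assms(1)] by blast
qed

lemma gg_nonneg:
  assumes "c \<ge> 1" "0 \<le> x"
  shows "0 \<le> gg c x"
proof -
  have pos: "c + exp x > 0" using assms by (smt (verit) exp_gt_zero)
  have "ln (c + exp x) = x + ln (1 + c * exp (-x))"
  proof -
    have "c + exp x = exp x * (1 + c * exp (-x))" by (simp add: field_simps exp_minus)
    moreover have "1 + c * exp (-x) > 0" using assms by (smt (verit) exp_gt_zero mult_nonneg_nonneg)
    ultimately show ?thesis by (simp add: ln_mult)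
  qed
  moreover have "ln (1 + c * exp (-x)) \<ge> 0" using assms by (simp add: mult_nonneg_nonneg)
  moreover have "x - x * exp x / (c + exp x) = x * c / (c + exp x)"
    using pos by (simp add: field_simps)
  moreover have "x * c / (c + exp x) \<ge> 0" using assms pos by simp
  ultimately show ?thesis unfolding gg_def by linarith
qed

lemma ELB_gg: "ELB k L D = gg (real L - 1) (2 * real D powr (k - 1/2))"
  unfolding ELB_def gg_def by simp

theorem mainTheorem3:
  fixes L D :: nat
  assumes "L \<ge> 2" and "D \<ge> 1"
  shows "antimono (\<lambda>k. ELB k L D) \<and> (\<forall>k. 0 \<le> ELB k L D \<and> ELB k L D \<le> ln (real L))"
proof -
  have c: "real L - 1 \<ge> 1" using assms by simp
  have D1: "real D \<ge> 1" using assms by simp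
  have xpos: "0 \<le> 2 * real D powr (k - 1/2)" for k by simp
  have "antimono (\<lambda>k. ELB k L D)"
  proof (rule antimonoI)
    fix a b :: real assume "a \<le> b"
    hence "real D powr (a - 1/2) \<le> real D powr (b - 1/2)" using D1 by (intro powr_mono) auto
    thus "ELB b L D \<le> ELB a L D" unfolding ELB_gg
      by (intro gg_anti[OF c xpos]) simp
  qed
  moreover have "0 \<le> ELB k L D" for k unfolding ELB_gg by (rule gg_nonneg[OF c xpos])
  moreover have "ELB k L D \<le> ln (real L)" for k
  proof -
    have "gg (real L - 1) (2 * real D powr (k - 1/2)) \<le> gg (real L - 1) 0"
      by (rule gg_anti[OF c order_refl xpos])
    thus ?thesis unfolding ELB_gg gg_def by simp
  qed
  ultimately show ?thesis by blast
qed

end
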